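(* Let $X$ be a random variable taking values in a finite set $\mathcal X$ of size $s \ge 1$, and let $\ell := \log s - \mathcal H(X)$. Then for every $x \in \mathcal X$, \[ \mathbb P(X = x) \le \frac{2}{s} + \ell. \]
   Context: All logarithms are base $2$. The Shannon entropy of $X$ is $\mathcal H(X) = -\sum_{x\in\mathcal X}\mathbb P(X=x)\log \mathbb P(X=x)$, with the convention $0\log 0 = 0$. *)

theory Defs
  imports "HOL-Probability.Probability"
begin

text \<open>Shannon entropy (base 2) of a random variable X on a probability space M,
  taking values in the finite set A:
  H(X) = - sum over x in A of P(X = x) * log2 P(X = x), with 0 log 0 = 0.
  Note: log 2 0 = 0 in Isabelle, so the convention 0 log 0 = 0 holds automatically.\<close>
definition shannon_entropy :: "'s measure \<Rightarrow> ('s \<Rightarrow> 'a) \<Rightarrow> 'a set \<Rightarrow> real" where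
  "shannon_entropy M X A =
     - (\<Sum>x\<in>A. measure M {\<omega>\<in>space M. X \<omega> = x} * log 2 (measure M {\<omega>\<in>space M. X \<omega> = x}))"

end

theory Submission
  imports Defs
begin

lemma term_bound:
  fixes q s :: real
  assumes "q \<ge> 0" "s > 0"
  shows "q * log 2 (s * q) \<ge> (q - 1/s) / ln 2"
proof (cases "q = 0")
  case True then show ?thesis using assms by (simp add: divide_simps)
next
  case False
  then have qp: "q > 0" using assms by simp
  have "ln (1/(s*q)) \<le> 1/(s*q) - 1" using qp assms by (intro ln_le_minus_one) auto
  then have "ln (s*q) \<ge> 1 - 1/(s*q)" using qp assms by (simp add: ln_div)
  then have "q * ln (s*q) \<ge> q * (1 - 1/(s*q))" using qp by (intro mult_left_mono) auto
  also have "q * (1 - 1/(s*q)) = q - 1/s" using qp assms by (simp add: field_simps)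
  finally have "q * ln (s*q) \<ge> q - 1/s" .
  then show ?thesis by (simp add: log_def divide_right_mono)
qed

lemma term_bound2:
  fixes q s :: real
  assumes "q \<ge> 0" "s > 0"
  shows "q * log 2 (s * q) \<ge> q + (q - 2/s) / ln 2"
proof (cases "q = 0")
  case True then show ?thesis using assms by (simp add: divide_simps)
next
  case False
  then have qp: "q > 0" using assms by simp
  have "ln (1/(s*q/2)) \<le> 1/(s*q/2) - 1" using qp assms by (intro ln_le_minus_one) auto
  then have "ln (s*q/2) \<ge> 1 - 2/(s*q)" using qp assms by (simp add: ln_div)
  moreover have "ln (s*q/2) = ln (s*q) - ln 2" using qp assms by (simp add: ln_div)
  ultimately have "ln (s*q) \<ge> ln 2 + 1 - 2/(s*q)" by simp
  then have "q * ln (s*q) \<ge> q * (ln 2 + 1 - 2/(s*q))" using qp by (intro mult_left_mono) auto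
  also have "q * (ln 2 + 1 - 2/(s*q)) = q * ln 2 + (q - 2/s)" using qp assms by (simp add: field_simps)
  finally have h: "q * ln (s*q) \<ge> q * ln 2 + (q - 2/s)" .
  have "q * log 2 (s * q) = q * ln (s*q) / ln 2" by (simp add: log_def)
  also have "\<dots> \<ge> (q * ln 2 + (q - 2/s)) / ln 2" using h by (simp add: divide_right_mono)
  also have "(q * ln 2 + (q - 2/s)) / ln 2 = q + (q - 2/s) / ln 2" by (simp add: field_simps)
  finally show ?thesis by simp
qed

theorem lemma3p3:
  fixes M :: "'s measure" and X :: "'s \<Rightarrow> 'a" and A :: "'a set" and x :: 'a
  assumes "prob_space M"
    and "finite A" and "card A \<ge> 1"
    and "X \<in> measurable M (count_space A)"
    and "x \<in> A"
  shows "measure M {\<omega>\<in>space M. X \<omega> = x}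
           \<le> 2 / real (card A) + (log 2 (real (card A)) - shannon_entropy M X A)"
proof -
  interpret prob_space M by fact
  define P where "P y = measure M {\<omega>\<in>space M. X \<omega> = y}" for y
  define s where "s = real (card A)"
  have sp: "s > 0" using assms(3) by (simp add: s_def)
  have P0: "P y \<ge> 0" for y by (simp add: P_def)
  have meas: "{\<omega>\<in>space M. X \<omega> = y} \<in> sets M" for y
  proof -
    have "{\<omega>\<in>space M. X \<omega> = y} = X -` {y} \<inter> space M" by auto
    moreover have "X -` ({y} \<inter> A) \<inter> space M \<in> sets M"
      using measurable_sets[OF assms(4), of "{y} \<inter> A"] by auto
    moreover have "X -` ({y} \<inter> A) \<inter> space M = X -` {y} \<inter> space M"
      using measurable_space[OF assms(4)] by auto
    ultimately show ?thesis by simp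
  qed
  have "(\<Union>y\<in>A. {\<omega>\<in>space M. X \<omega> = y}) = space M"
    using measurable_space[OF assms(4)] by auto
  moreover have "measure M (\<Union>y\<in>A. {\<omega>\<in>space M. X \<omega> = y}) = (\<Sum>y\<in>A. P y)"
    unfolding P_def
    by (rule measure_finite_Union) (auto simp: assms(2) meas disjoint_family_on_def)
  ultimately have sum1: "(\<Sum>y\<in>A. P y) = 1" by (simp add: prob_space)
  have H: "shannon_entropy M X A = - (\<Sum>y\<in>A. P y * log 2 (P y))"
    by (simp add: shannon_entropy_def P_def)
  have tm: "P y * log 2 s + P y * log 2 (P y) = P y * log 2 (s * P y)" for y
  proof (cases "P y = 0")
    case False then have "P y > 0" using P0[of y] by simp
    then show ?thesis using sp by (simp add: log_mult distrib_left)
  qed simp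
  have "log 2 s - shannon_entropy M X A = (\<Sum>y\<in>A. P y) * log 2 s + (\<Sum>y\<in>A. P y * log 2 (P y))"
    using H sum1 by simp
  also have "\<dots> = (\<Sum>y\<in>A. P y * log 2 (s * P y))"
    by (simp add: sum_distrib_right sum.distrib[symmetric] tm)
  also have "\<dots> = P x * log 2 (s * P x) + (\<Sum>y\<in>A-{x}. P y * log 2 (s * P y))"
    using assms(2,5) by (simp add: sum.remove)
  also have "\<dots> \<ge> (P x + (P x - 2/s) / ln 2) + (\<Sum>y\<in>A-{x}. (P y - 1/s) / ln 2)"
    using term_bound[OF P0 sp] term_bound2[OF P0 sp] by (intro add_mono sum_mono) auto
  finally have L: "log 2 s - shannon_entropy M X A \<ge>
      P x + (P x - 2/s) / ln 2 + (\<Sum>y\<in>A-{x}. (P y - 1/s) / ln 2)" .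
  have "(\<Sum>y\<in>A-{x}. (P y - 1/s) / ln 2) = ((\<Sum>y\<in>A-{x}. P y) - (s - 1)/s) / ln 2"
    using assms(2,5) sp by (simp add: sum_divide_distrib[symmetric] sum_subtractf card_Diff_singleton s_def
        of_nat_diff assms(3) diff_divide_distrib)
  also have "(\<Sum>y\<in>A-{x}. P y) = 1 - P x"
    using sum1 assms(2,5) by (simp add: sum.remove)
  finally have R: "(\<Sum>y\<in>A-{x}. (P y - 1/s) / ln 2) = (1 - P x - (s - 1)/s) / ln 2" .
  have "P x + (P x - 2/s) / ln 2 + (1 - P x - (s - 1)/s) / ln 2 = P x - (1/s) / ln 2"
    using sp by (simp add: field_simps)
  moreover have "(1/s) / ln 2 \<le> 2/s"
  proof -
    have "ln (2::real) \<ge> 2/3" by (rule ln2_ge_two_thirds)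
    then show ?thesis using sp by (simp add: field_simps)
  qed
  ultimately have "log 2 s - shannon_entropy M X A \<ge> P x - 2/s" using L R by linarith
  then show ?thesis unfolding P_def s_def by simp
qed

end
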